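(* There exist a nondeterministic planning domain $D$ and a goal $\psi$ which is an LTL$_f$ formula (equally read as an LTL formula) such that: (a) there is no policy $f$ with $(D,f)\models A^{\text{sa-fair}}\psi$, i.e., the state-action fair planning problem $\langle D,\psi\rangle$ has no solution; but (b) for every deterministic automaton $A_\psi$ over the alphabet $2^{\mathcal{F}\cup\mathcal{A}}$ accepting exactly the infinite traces that satisfy $\psi$, the state-action fair planning problem $\langle D',Acc\rangle$ has a solution, where $D'=D\times A_\psi$ is the synchronous product and $Acc$ is the goal consisting of those infinite traces of $D'$ whose projection to $D$ is accepted by $A_\psi$.
   Context: A nondeterministic planning domain is a tuple $D=(St,Act,s_0,Tr)$ with finite state set $St=2^{\mathcal{F}}$ (assignments to fluents $\mathcal{F}$), finite action set $Act=2^{\mathcal{A}}$, initial state $s_0$, and $Tr\subseteq St\times Act\times St$; every state has an applicable action. A trace is a finite or infinite sequence $(s_0\cup a_0)(s_1\cup a_1)\cdots$ starting at $s_0$ with $(s_{i-1},a_{i-1},s_i)\in Tr$. A policy is a function $f:St^+\to Act$ with $f(u)$ applicable in the last state of $u$; an $f$-trace is a trace with $f(s_0\cdots s_i)=a_i$ for all prefixes. LTL/LTL$_f$: usual syntax with atoms, $\neg$, $\wedge$, next $X$, until $U$; LTL$_f$ is interpreted on finite sequences ($X\psi$ at $j$ requires position $j+1$ to exist), and an infinite trace satisfies an LTL$_f$ formula if some finite prefix does. A goal is a set of infinite traces; a policy $f$ solves the state-action fair planning problem $\langle D,G\rangle$ if every infinite state-action fair $f$-trace is in $G$, where an infinite trace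 is state-action fair if for every transition $(s,a,s')\in Tr$, if $s,a$ occurs infinitely often then $s,a$ immediately followed by $s'$ occurs infinitely often. $(D,f)\models A^{\text{sa-fair}}\psi$ means $f$ solves the state-action fair problem with goal the set of traces satisfying $\psi$. A deterministic automaton is $(\Sigma,Q,q_0,\delta,\mathcal{C})$ with $\delta:Q\times\Sigma\to Q$, where an infinite word is accepted iff its unique run satisfies the acceptance condition $\mathcal{C}$ (of any type). The synchronous product $D\times A$ is the domain whose states are pairs $(d,q)$, initial state $(s_0,q_0)$, with a transition from $(d,q)$ to $(d',q')$ on action $a$ iff $(d,a,d')\in Tr$ and $\delta(q,d\cup a)=q'$; state-action fairness and policies in $D\times A$ are defined with respect to its own states and transitions. *)

theory Defs
  imports Main
begin

text \<open>A domain is given by its initial state s0 and transition relation Tr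
  (triples (s, a, s')); its state set is passed explicitly where needed.\<close>

definition applicable :: "('s \<times> 'act \<times> 's) set \<Rightarrow> 's \<Rightarrow> 'act \<Rightarrow> bool" where
  "applicable Tr s a \<longleftrightarrow> (\<exists>s'. (s, a, s') \<in> Tr)"

definition is_policy :: "'s set \<Rightarrow> ('s \<times> 'act \<times> 's) set \<Rightarrow> ('s list \<Rightarrow> 'act) \<Rightarrow> bool" where
  "is_policy St Tr f \<longleftrightarrow>
     (\<forall>u. u \<noteq> [] \<and> set u \<subseteq> St \<longrightarrow> applicable Tr (last u) (f u))"

definition is_inf_trace :: "'s \<Rightarrow> ('s \<times> 'act \<times> 's) set \<Rightarrow> (nat \<Rightarrow> 's \<times> 'act) \<Rightarrow> bool" where
  "is_inf_trace s0 Tr w \<longleftrightarrow>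
     fst (w 0) = s0 \<and> (\<forall>i. (fst (w i), snd (w i), fst (w (Suc i))) \<in> Tr)"

definition is_f_trace ::
  "'s \<Rightarrow> ('s \<times> 'act \<times> 's) set \<Rightarrow> ('s list \<Rightarrow> 'act) \<Rightarrow> (nat \<Rightarrow> 's \<times> 'act) \<Rightarrow> bool" where
  "is_f_trace s0 Tr f w \<longleftrightarrow>
     is_inf_trace s0 Tr w \<and> (\<forall>i. f (map (\<lambda>j. fst (w j)) [0..<Suc i]) = snd (w i))"

definition sa_fair :: "('s \<times> 'act \<times> 's) set \<Rightarrow> (nat \<Rightarrow> 's \<times> 'act) \<Rightarrow> bool" where
  "sa_fair Tr w \<longleftrightarrow>
     (\<forall>s a s'. (s, a, s') \<in> Tr \<longrightarrow> (\<exists>\<^sub>\<infinity>i. w i = (s, a)) \<longrightarrow>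
        (\<exists>\<^sub>\<infinity>i. w i = (s, a) \<and> fst (w (Suc i)) = s'))"

definition solves_sa_fair ::
  "'s \<Rightarrow> ('s \<times> 'act \<times> 's) set \<Rightarrow> ('s list \<Rightarrow> 'act) \<Rightarrow> (nat \<Rightarrow> 's \<times> 'act) set \<Rightarrow> bool" where
  "solves_sa_fair s0 Tr f G \<longleftrightarrow>
     (\<forall>w. is_f_trace s0 Tr f w \<and> sa_fair Tr w \<longrightarrow> w \<in> G)"

definition has_sa_fair_solution ::
  "'s set \<Rightarrow> 's \<Rightarrow> ('s \<times> 'act \<times> 's) set \<Rightarrow> (nat \<Rightarrow> 's \<times> 'act) set \<Rightarrow> bool" where
  "has_sa_fair_solution St s0 Tr G \<longleftrightarrow> (\<exists>f. is_policy St Tr f \<and> solves_sa_fair s0 Tr f G)"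

definition is_planning_domain ::
  "'p set \<Rightarrow> 'p set \<Rightarrow> 'p set \<Rightarrow> ('p set \<times> 'p set \<times> 'p set) set \<Rightarrow> bool" where
  "is_planning_domain F A s0 Tr \<longleftrightarrow>
     finite F \<and> finite A \<and> F \<inter> A = {} \<and> s0 \<subseteq> F \<and>
     Tr \<subseteq> Pow F \<times> Pow A \<times> Pow F \<and>
     (\<forall>s. s \<subseteq> F \<longrightarrow> (\<exists>a. applicable Tr s a))"

datatype 'p ltlf = Atom 'p | Not "'p ltlf" | And "'p ltlf" "'p ltlf"
  | Next "'p ltlf" | Until "'p ltlf" "'p ltlf"

primrec atoms :: "'p ltlf \<Rightarrow> 'p set" where
  "atoms (Atom p) = {p}"
| "atoms (Not \<phi>) = atoms \<phi>"
| "atoms (And \<phi> \<psi>) = atoms \<phi> \<union> atoms \<psi>"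
| "atoms (Next \<phi>) = atoms \<phi>"
| "atoms (Until \<phi> \<psi>) = atoms \<phi> \<union> atoms \<psi>"

text \<open>ltlf_sat w n j \<phi>: the finite sequence w 0, ..., w (n-1) satisfies \<phi> at position j (j < n).\<close>
primrec ltlf_sat :: "(nat \<Rightarrow> 'p set) \<Rightarrow> nat \<Rightarrow> nat \<Rightarrow> 'p ltlf \<Rightarrow> bool" where
  "ltlf_sat w n j (Atom p) \<longleftrightarrow> p \<in> w j"
| "ltlf_sat w n j (Not \<phi>) \<longleftrightarrow> \<not> ltlf_sat w n j \<phi>"
| "ltlf_sat w n j (And \<phi> \<psi>) \<longleftrightarrow> ltlf_sat w n j \<phi> \<and> ltlf_sat w n j \<psi>"
| "ltlf_sat w n j (Next \<phi>) \<longleftrightarrow> j + 1 < n \<and> ltlf_sat w n (j + 1) \<phi>"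
| "ltlf_sat w n j (Until \<phi> \<psi>) \<longleftrightarrow>
     (\<exists>k. j \<le> k \<and> k < n \<and> ltlf_sat w n k \<psi> \<and> (\<forall>i. j \<le> i \<and> i < k \<longrightarrow> ltlf_sat w n i \<phi>))"

definition ltlf_models_inf :: "'p ltlf \<Rightarrow> (nat \<Rightarrow> 'p set) \<Rightarrow> bool" where
  "ltlf_models_inf \<phi> w \<longleftrightarrow> (\<exists>n. 0 < n \<and> ltlf_sat w n 0 \<phi>)"

definition letters :: "(nat \<Rightarrow> 'p set \<times> 'p set) \<Rightarrow> nat \<Rightarrow> 'p set" where
  "letters w i = fst (w i) \<union> snd (w i)"

text \<open>A deterministic automaton over alphabet 2^P with finite state set Q, initial state q0,
  transition function \<delta>, and a Muller acceptance condition Acc (a set of sets of states);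
  Muller conditions subsume all the usual acceptance types (Buchi, co-Buchi, parity,
  Rabin, Streett, ...).\<close>
definition is_det_automaton :: "'p set \<Rightarrow> 'q set \<Rightarrow> 'q \<Rightarrow> ('q \<Rightarrow> 'p set \<Rightarrow> 'q) \<Rightarrow> bool" where
  "is_det_automaton P Q q0 \<delta> \<longleftrightarrow>
     finite Q \<and> q0 \<in> Q \<and> (\<forall>q \<in> Q. \<forall>\<sigma>. \<sigma> \<subseteq> P \<longrightarrow> \<delta> q \<sigma> \<in> Q)"

fun run :: "'q \<Rightarrow> ('q \<Rightarrow> 'p set \<Rightarrow> 'q) \<Rightarrow> (nat \<Rightarrow> 'p set) \<Rightarrow> nat \<Rightarrow> 'q" where
  "run q0 \<delta> w 0 = q0"
| "run q0 \<delta> w (Suc i) = \<delta> (run q0 \<delta> w i) (w i)"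

definition aut_accepts :: "'q \<Rightarrow> ('q \<Rightarrow> 'p set \<Rightarrow> 'q) \<Rightarrow> 'q set set \<Rightarrow> (nat \<Rightarrow> 'p set) \<Rightarrow> bool" where
  "aut_accepts q0 \<delta> Acc w \<longleftrightarrow> {q. \<exists>\<^sub>\<infinity>i. run q0 \<delta> w i = q} \<in> Acc"

definition prod_Tr ::
  "('p set \<times> 'p set \<times> 'p set) set \<Rightarrow> 'q set \<Rightarrow> ('q \<Rightarrow> 'p set \<Rightarrow> 'q)
   \<Rightarrow> (('p set \<times> 'q) \<times> 'p set \<times> ('p set \<times> 'q)) set" where
  "prod_Tr Tr Q \<delta> = {((d, q), a, (d', q')) | d q a d' q'.
      (d, a, d') \<in> Tr \<and> q \<in> Q \<and> \<delta> q (d \<union> a) = q'}"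

definition prod_goal ::
  "'p set \<Rightarrow> ('p set \<times> 'p set \<times> 'p set) set \<Rightarrow> 'q set \<Rightarrow> 'q \<Rightarrow> ('q \<Rightarrow> 'p set \<Rightarrow> 'q) \<Rightarrow> 'q set set
   \<Rightarrow> (nat \<Rightarrow> ('p set \<times> 'q) \<times> 'p set) set" where
  "prod_goal s0 Tr Q q0 \<delta> Acc = {w. is_inf_trace (s0, q0) (prod_Tr Tr Q \<delta>) w \<and>
      aut_accepts q0 \<delta> Acc (\<lambda>i. fst (fst (w i)) \<union> snd (w i))}"

end

theory Submission
  imports Defs "HOL-Library.Infinite_Set"
begin

definition TT :: "nat ltlf" where "TT = Not (And (Atom 0) (Not (Atom 0)))"
definition psi0 :: "nat ltlf" where
  "psi0 = Until TT (And (Atom 0) (Next (Next (Atom 0))))"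
definition Tr0 :: "(nat set \<times> nat set \<times> nat set) set" where
  "Tr0 = {({}, {}, {}), ({}, {}, {0}), ({0}, {}, {})}"

lemma psi0_iff: "ltlf_models_inf psi0 w \<longleftrightarrow> (\<exists>k. 0 \<in> w k \<and> 0 \<in> w (Suc (Suc k)))"
proof
  assume "ltlf_models_inf psi0 w"
  then show "\<exists>k. 0 \<in> w k \<and> 0 \<in> w (Suc (Suc k))"
    by (auto simp: ltlf_models_inf_def psi0_def TT_def)
next
  assume "\<exists>k. 0 \<in> w k \<and> 0 \<in> w (Suc (Suc k))"
  then obtain k where "0 \<in> w k" "0 \<in> w (Suc (Suc k))" by blast
  then have "ltlf_sat w (k+3) 0 psi0"
    by (auto simp: psi0_def TT_def intro!: exI[of _ k])
  then show "ltlf_models_inf psi0 w" unfolding ltlf_models_inf_def by (intro exI[of _ "k+3"]) simp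
qed

lemma INFM_shift: "(\<exists>\<^sub>\<infinity>n. P (c + n)) \<longleftrightarrow> (\<exists>\<^sub>\<infinity>n::nat. P n)"
proof
  assume H: "\<exists>\<^sub>\<infinity>n. P (c + n)"
  show "\<exists>\<^sub>\<infinity>n::nat. P n" unfolding INFM_nat_le
  proof
    fix m
    obtain n where "n \<ge> m" "P (c + n)" using H unfolding INFM_nat_le by blast
    then show "\<exists>n\<ge>m. P n" by (intro exI[of _ "c+n"]) simp
  qed
next
  assume H: "\<exists>\<^sub>\<infinity>n::nat. P n"
  show "\<exists>\<^sub>\<infinity>n. P (c + n)" unfolding INFM_nat_le
  proof
    fix m
    obtain n where "n \<ge> c + m" "P n" using H unfolding INFM_nat_le by blast
    then show "\<exists>n\<ge>m. P (c + n)" by (intro exI[of _ "n - c"]) simp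
  qed
qed

definition cat :: "(nat \<Rightarrow> 'a) \<Rightarrow> nat \<Rightarrow> (nat \<Rightarrow> 'a) \<Rightarrow> nat \<Rightarrow> 'a" where
  "cat v c u n = (if n < c then v n else u (n - c))"

lemma run_cat1: "n \<le> c \<Longrightarrow> run q0 \<delta> (cat v c u) n = run q0 \<delta> v n"
  by (induction n) (auto simp: cat_def)

lemma cat_ge: "cat v c u (c + m) = u m" by (simp add: cat_def)

lemma run_cat2: "run q0 \<delta> (cat v c u) (c + m) = run (run q0 \<delta> v c) \<delta> u m"
  by (induction m) (simp_all add: run_cat1 cat_ge)

lemma acc_cat: "aut_accepts q0 \<delta> Acc (cat v c u) \<longleftrightarrow>
   {q. \<exists>\<^sub>\<infinity>m. run (run q0 \<delta> v c) \<delta> u m = q} \<in> Acc"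
proof -
  have "{q. \<exists>\<^sub>\<infinity>n. run q0 \<delta> (cat v c u) n = q} = {q. \<exists>\<^sub>\<infinity>m. run (run q0 \<delta> v c) \<delta> u m = q}"
    using INFM_shift[of "\<lambda>n. run q0 \<delta> (cat v c u) n = _" c] by (simp add: run_cat2)
  then show ?thesis by (simp add: aut_accepts_def)
qed

lemma pigeon:
  assumes "finite Q" "\<exists>\<^sub>\<infinity>i. P i" "\<And>i. P i \<Longrightarrow> g i \<in> Q"
  shows "\<exists>q\<in>Q. \<exists>\<^sub>\<infinity>i. P i \<and> g i = q"
proof -
  have "\<exists>\<^sub>\<infinity>i. \<exists>q\<in>Q. P i \<and> g i = q"
    using assms(2) by (rule INFM_mono) (use assms(3) in blast)
  then show ?thesis using INFM_finite_Bex_distrib[OF assms(1), of "\<lambda>q i. P i \<and> g i = q"] by blast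
qed


lemma INFM_mod3: "r < 3 \<Longrightarrow> \<exists>\<^sub>\<infinity>i::nat. i mod 3 = r"
  unfolding INFM_nat_le by (intro allI, rule_tac x="3*m+r" in exI) simp

lemma partA: "\<not> has_sa_fair_solution (Pow {0}) {} Tr0 {w. ltlf_models_inf psi0 (letters w)}"
proof
  assume "has_sa_fair_solution (Pow {0}) {} Tr0 {w. ltlf_models_inf psi0 (letters w)}"
  then obtain f where pol: "is_policy (Pow {0}) Tr0 f"
    and sol: "solves_sa_fair {} Tr0 f {w. ltlf_models_inf psi0 (letters w)}"
    unfolding has_sa_fair_solution_def by blast
  define w where "w i = (if i mod 3 = 1 then {0::nat} else {}, {}::nat set)" for i :: nat
  have fval: "f u = {}" if "u \<noteq> []" "set u \<subseteq> Pow {0}" for u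
  proof -
    have "applicable Tr0 (last u) (f u)" using pol that unfolding is_policy_def by blast
    then show ?thesis unfolding applicable_def Tr0_def by auto
  qed
  have st: "fst (w i) \<subseteq> {0}" for i by (simp add: w_def)
  have ft: "is_f_trace {} Tr0 f w"
    unfolding is_f_trace_def is_inf_trace_def
  proof (intro conjI allI)
    show "fst (w 0) = {}" by (simp add: w_def)
  next
    fix i
    have "(i::nat) mod 3 = 0 \<or> i mod 3 = 1 \<or> i mod 3 = 2" by arith
    moreover have "Suc i mod 3 = (if i mod 3 = 2 then 0 else Suc (i mod 3))" by (simp add: mod_Suc)
    ultimately show "(fst (w i), snd (w i), fst (w (Suc i))) \<in> Tr0"
      unfolding Tr0_def w_def by auto
  next
    fix i
    show "f (map (\<lambda>j. fst (w j)) [0..<Suc i]) = snd (w i)"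
    proof -
      have "set (map (\<lambda>j. fst (w j)) [0..<Suc i]) \<subseteq> Pow {0}" using st by auto
      then have "f (map (\<lambda>j. fst (w j)) [0..<Suc i]) = {}" by (intro fval) auto
      then show ?thesis by (simp add: w_def)
    qed
  qed
  have fair: "sa_fair Tr0 w"
    unfolding sa_fair_def
  proof (intro allI impI)
    fix s a s'
    assume "(s, a, s') \<in> Tr0"
    then consider "s = {}" "a = {}" "s' = {}" | "s = {}" "a = {}" "s' = {0}" | "s = {0}" "a = {}" "s' = {}"
      unfolding Tr0_def by auto
    then show "\<exists>\<^sub>\<infinity>i. w i = (s, a) \<and> fst (w (Suc i)) = s'"
    proof cases
      case 1
      show ?thesis using INFM_mod3[of 2] by (rule INFM_mono) (auto simp: 1 w_def mod_Suc)
    next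
      case 2
      show ?thesis using INFM_mod3[of 0] by (rule INFM_mono) (auto simp: 2 w_def mod_Suc)
    next
      case 3
      show ?thesis using INFM_mod3[of 1] by (rule INFM_mono) (auto simp: 3 w_def mod_Suc)
    qed
  qed
  have "ltlf_models_inf psi0 (letters w)" using sol ft fair unfolding solves_sa_fair_def by blast
  then obtain k where "0 \<in> letters w k" "0 \<in> letters w (Suc (Suc k))" unfolding psi0_iff by blast
  then have "k mod 3 = 1" "Suc (Suc k) mod 3 = 1" by (auto simp: letters_def w_def split: if_splits)
  then show False by arith
qed


lemma prodTr0: "((d,q),a,(d',q')) \<in> prod_Tr Tr0 Q \<delta> \<longleftrightarrow>
   q \<in> Q \<and> a = {} \<and> q' = \<delta> q d \<and> ((d = {} \<and> (d' = {} \<or> d' = {0})) \<or> (d = {0} \<and> d' = {}))"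
  unfolding prod_Tr_def Tr0_def by auto

lemma partB:
  assumes aut: "is_det_automaton {0} Q q0 \<delta>"
    and L: "\<forall>w. (\<forall>i. w i \<subseteq> {0}) \<longrightarrow> (aut_accepts q0 \<delta> Acc w \<longleftrightarrow> ltlf_models_inf psi0 w)"
  shows "has_sa_fair_solution (Pow {0} \<times> Q) ({}, q0) (prod_Tr Tr0 Q \<delta>) (prod_goal {} Tr0 Q q0 \<delta> Acc)"
  unfolding has_sa_fair_solution_def
proof (intro exI conjI)
  have finQ: "finite Q" using aut unfolding is_det_automaton_def by blast
  show "is_policy (Pow {0} \<times> Q) (prod_Tr Tr0 Q \<delta>) (\<lambda>_. {})"
    unfolding is_policy_def
  proof (intro allI impI)
    fix u
    assume "u \<noteq> [] \<and> set u \<subseteq> Pow {0::nat} \<times> Q"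
    then have "last u \<in> Pow {0} \<times> Q" using last_in_set by blast
    then obtain d q where lu: "last u = (d, q)" "d \<subseteq> {0}" "q \<in> Q" by auto
    then have "d = {} \<or> d = {0}" by auto
    then have "((d,q),{},({}, \<delta> q d)) \<in> prod_Tr Tr0 Q \<delta>" using lu by (auto simp: prodTr0)
    then show "applicable (prod_Tr Tr0 Q \<delta>) (last u) {}" unfolding applicable_def lu by blast
  qed
  show "solves_sa_fair ({}, q0) (prod_Tr Tr0 Q \<delta>) (\<lambda>_. {}) (prod_goal {} Tr0 Q q0 \<delta> Acc)"
    unfolding solves_sa_fair_def
  proof (intro allI impI, elim conjE)
    fix w
    assume ft: "is_f_trace ({}, q0) (prod_Tr Tr0 Q \<delta>) (\<lambda>_. {}) w" and fair: "sa_fair (prod_Tr Tr0 Q \<delta>) w"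
    have it: "is_inf_trace ({}, q0) (prod_Tr Tr0 Q \<delta>) w" using ft unfolding is_f_trace_def by blast
    define v where "v i = fst (fst (w i)) \<union> snd (w i)" for i
    define qq where "qq i = snd (fst (w i))" for i
    have tri: "((fst (fst (w i)), qq i), snd (w i), (fst (fst (w (Suc i))), qq (Suc i))) \<in> prod_Tr Tr0 Q \<delta>" for i
      using it unfolding is_inf_trace_def qq_def by simp
    have A1: "snd (w i) = {}" for i using tri[of i] by (simp add: prodTr0)
    have vi: "v i = fst (fst (w i))" for i by (simp add: v_def A1)
    have A2: "v i = {} \<or> v i = {0}" for i using tri[of i] by (auto simp: prodTr0 vi)
    have A3: "v i = {0} \<Longrightarrow> v (Suc i) = {}" for i using tri[of i] by (auto simp: prodTr0 vi)
    have A4: "qq i \<in> Q" for i using tri[of i] by (simp add: prodTr0)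
    have A5: "qq (Suc i) = \<delta> (qq i) (v i)" for i using tri[of i] by (simp add: prodTr0 vi)
    have wi: "w i = ((v i, qq i), {})" for i
      using A1[of i] by (simp add: vi qq_def prod_eq_iff)
    have qrun: "qq i = run q0 \<delta> v i" for i
    proof (induction i)
      case 0
      then show ?case using it unfolding is_inf_trace_def qq_def by simp
    next
      case (Suc i)
      then show ?case by (simp add: A5)
    qed
    have vsub: "\<forall>i. v i \<subseteq> {0}" using A2 by auto
    have "ltlf_models_inf psi0 v"
    proof (rule ccontr)
      assume "\<not> ltlf_models_inf psi0 v"
      then have NO: "\<not> (0 \<in> v k \<and> 0 \<in> v (Suc (Suc k)))" for k unfolding psi0_iff by blast
      have "\<exists>\<^sub>\<infinity>i. v i = {}" unfolding INFM_nat_le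
      proof
        fix m
        show "\<exists>n\<ge>m. v n = {}"
        proof (cases "v m = {}")
          case True then show ?thesis by blast
        next
          case False then have "v (Suc m) = {}" using A2 A3 by blast
          then show ?thesis by (intro exI[of _ "Suc m"]) simp
        qed
      qed
      from pigeon[OF finQ this, of qq] A4 obtain q1 where q1: "q1 \<in> Q" "\<exists>\<^sub>\<infinity>i. v i = {} \<and> qq i = q1"
        by blast
      have "\<exists>\<^sub>\<infinity>i. w i = (({}, q1), {})" using q1(2) by (rule INFM_mono) (simp add: wi)
      moreover have "(({}, q1), {}, ({0}, \<delta> q1 {})) \<in> prod_Tr Tr0 Q \<delta>" using q1(1) by (simp add: prodTr0)
      ultimately have "\<exists>\<^sub>\<infinity>i. w i = (({}, q1), {}) \<and> fst (w (Suc i)) = ({0}, \<delta> q1 {})"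
        using fair unfolding sa_fair_def by blast
      then have "\<exists>\<^sub>\<infinity>i. v (1 + i) = {0}" by (rule INFM_mono) (simp add: vi)
      then have "\<exists>\<^sub>\<infinity>i. v i = {0}" by (rule INFM_shift[of "\<lambda>n. v n = {0}" 1, THEN iffD1])
      from pigeon[OF finQ this, of "\<lambda>i. qq (Suc i)"] A4 obtain qs where
        qs: "qs \<in> Q" "\<exists>\<^sub>\<infinity>i. v i = {0} \<and> qq (Suc i) = qs" by blast
      then obtain i where i: "v i = {0}" "qq (Suc i) = qs" using INFM_EX by blast
      have "\<exists>\<^sub>\<infinity>i. w (1 + i) = (({}, qs), {})" using qs(2) by (rule INFM_mono) (simp add: wi A3)
      then have "\<exists>\<^sub>\<infinity>i. w i = (({}, qs), {})" by (rule INFM_shift[of "\<lambda>n. w n = (({}, qs), {})" 1, THEN iffD1])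
      moreover have "(({}, qs), {}, ({0}, \<delta> qs {})) \<in> prod_Tr Tr0 Q \<delta>" using qs(1) by (simp add: prodTr0)
      ultimately have "\<exists>\<^sub>\<infinity>j. w j = (({}, qs), {}) \<and> fst (w (Suc j)) = ({0}, \<delta> qs {})"
        using fair unfolding sa_fair_def by blast
      then obtain j where j: "w j = (({}, qs), {})" "fst (w (Suc j)) = ({0}, \<delta> qs {})"
        using INFM_EX by blast
      have vj: "v (Suc j) = {0}" "qq j = qs" using j by (simp_all add: vi qq_def)
      define u :: "nat \<Rightarrow> nat set" where "u n = (if n = 1 then {0} else {})" for n
      define X where "X = cat v (Suc i) u"
      define Y where "Y = cat v j u"
      have sameq: "run q0 \<delta> v (Suc i) = run q0 \<delta> v j" using i(2) vj(2) qrun by metis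
      have XY: "aut_accepts q0 \<delta> Acc X \<longleftrightarrow> aut_accepts q0 \<delta> Acc Y"
        unfolding X_def Y_def acc_cat sameq ..
      have Xs: "\<forall>n. X n \<subseteq> {0}" using vsub by (simp add: X_def cat_def u_def)
      have Ys: "\<forall>n. Y n \<subseteq> {0}" using vsub by (simp add: Y_def cat_def u_def)
      have "ltlf_models_inf psi0 X" unfolding psi0_iff
        by (rule exI[of _ i]) (simp add: X_def cat_def u_def i(1))
      then have "ltlf_models_inf psi0 Y" using L Xs Ys XY by blast
      then obtain k where k: "0 \<in> Y k" "0 \<in> Y (Suc (Suc k))" unfolding psi0_iff by blast
      show False
      proof (cases "Suc (Suc k) < j")
        case True
        then show False using k NO[of k] by (simp add: Y_def cat_def)
      next
        case False
        then have "Suc (Suc k) - j = 1" using k(2) by (simp add: Y_def cat_def u_def split: if_splits)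
        then have "Suc k = j" by arith
        then show False using k(1) vj(1) NO[of k] by (simp add: Y_def cat_def)
      qed
    qed
    then have acc: "aut_accepts q0 \<delta> Acc v" using L vsub by blast
    have "(\<lambda>i. fst (fst (w i)) \<union> snd (w i)) = v" by (simp add: v_def fun_eq_iff)
    then show "w \<in> prod_goal {} Tr0 Q q0 \<delta> Acc" unfolding prod_goal_def using it acc by simp
  qed
qed

lemma pdom: "is_planning_domain {0::nat} {} {} Tr0"
proof -
  have "Tr0 \<subseteq> Pow {0} \<times> Pow ({}::nat set) \<times> Pow {0}" unfolding Tr0_def by auto
  moreover have "\<forall>s. s \<subseteq> {0::nat} \<longrightarrow> (\<exists>a. applicable Tr0 s a)"
  proof (intro allI impI)
    fix s :: "nat set" assume "s \<subseteq> {0}"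
    then have "s = {} \<or> s = {0}" by auto
    then show "\<exists>a. applicable Tr0 s a" unfolding applicable_def Tr0_def by auto
  qed
  ultimately show ?thesis unfolding is_planning_domain_def by simp
qed

theorem theorem1:
  shows "\<exists>(F :: nat set) (A :: nat set) (s0 :: nat set) Tr (\<psi> :: nat ltlf).
    is_planning_domain F A s0 Tr \<and> atoms \<psi> \<subseteq> F \<union> A \<and>
    \<not> has_sa_fair_solution (Pow F) s0 Tr {w. ltlf_models_inf \<psi> (letters w)} \<and>
    (\<forall>(Q :: nat set) q0 \<delta> Acc.
       is_det_automaton (F \<union> A) Q q0 \<delta> \<and>
       (\<forall>w. (\<forall>i. w i \<subseteq> F \<union> A) \<longrightarrow> (aut_accepts q0 \<delta> Acc w \<longleftrightarrow> ltlf_models_inf \<psi> w))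
       \<longrightarrow> has_sa_fair_solution (Pow F \<times> Q) (s0, q0) (prod_Tr Tr Q \<delta>)
             (prod_goal s0 Tr Q q0 \<delta> Acc))"
proof (rule exI[of _ "{0::nat}"], rule exI[of _ "{}"], rule exI[of _ "{}"], rule exI[of _ Tr0], rule exI[of _ psi0], intro conjI allI impI)
  show "is_planning_domain {0} {} {} Tr0" by (rule pdom)
  show "atoms psi0 \<subseteq> {0} \<union> {}" by (simp add: psi0_def TT_def)
  show "\<not> has_sa_fair_solution (Pow {0}) {} Tr0 {w. ltlf_models_inf psi0 (letters w)}" by (rule partA)
next
  fix Q :: "nat set" and q0 \<delta> Acc
  assume H: "is_det_automaton ({0} \<union> {}) Q q0 \<delta> \<and>
       (\<forall>w. (\<forall>i. w i \<subseteq> {0} \<union> {}) \<longrightarrow> (aut_accepts q0 \<delta> Acc w \<longleftrightarrow> ltlf_models_inf psi0 w))"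
  show "has_sa_fair_solution (Pow {0} \<times> Q) ({}, q0) (prod_Tr Tr0 Q \<delta>) (prod_goal {} Tr0 Q q0 \<delta> Acc)"
    using H by (intro partB) auto
qed

end
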